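(* For every positive integer $n$ there exists an acyclic unique sink orientation $\psi$ of the $n$-dimensional cube which is not $i$-nice for any $i < n-2$.
   Context: Let $Q^n = 2^{[n]}$ be the vertex set of the $n$-cube, with $u,v$ adjacent iff $|u\oplus v|=1$; faces are $F_{J,v}=\{u : v\oplus u\subseteq J\}$ for $J\subseteq[n]$. A unique sink orientation (USO) is an orientation of the cube's edges such that every nonempty face has a unique sink (vertex with no outgoing edges within the face); it is acyclic (an AUSO) if it has no directed cycle. The outmap $s_\psi(v)$ is the set of coordinates $j$ such that the edge $\{v,v\oplus\{j\}\}$ is directed away from $v$; the global sink is the vertex $t$ with $s_\psi(t)=\emptyset$. Let $d(v,u)$ be the length of a shortest directed path from $v$ to $u$ ($\infty$ if none). The reachmap is $r_\psi(v)=s_\psi(v)\cup\{j : \exists u \text{ reachable from } v \text{ by a directed path with } j\in s_\psi(u)\}$. A vertex $v$ is $i$-covered by $u$ if $d(v,u)\le i$ and $r_\psi(u)\subsetneq r_\psi(v)$; $\psi$ is $i$-nice if every vertex other than the global sink is $i$-covered by some vertex. *)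

theory Defs
  imports Main
begin

text \<open>Vertices of the n-cube are subsets of [n] = {1..n}. An orientation is encoded
by its outmap s :: nat set \<Rightarrow> nat set (only values on vertices matter).\<close>

definition symdiff :: "nat set \<Rightarrow> nat set \<Rightarrow> nat set" where
  "symdiff A B = (A - B) \<union> (B - A)"

definition is_vertex :: "nat \<Rightarrow> nat set \<Rightarrow> bool" where
  "is_vertex n v \<longleftrightarrow> v \<subseteq> {1..n}"

definition is_orientation :: "nat \<Rightarrow> (nat set \<Rightarrow> nat set) \<Rightarrow> bool" where
  "is_orientation n s \<longleftrightarrow>
     (\<forall>v. is_vertex n v \<longrightarrow> s v \<subseteq> {1..n} \<and>
        (\<forall>j\<in>{1..n}. j \<in> s v \<longleftrightarrow> j \<notin> s (symdiff v {j})))"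

definition dedge :: "nat \<Rightarrow> (nat set \<Rightarrow> nat set) \<Rightarrow> nat set \<Rightarrow> nat set \<Rightarrow> bool" where
  "dedge n s u w \<longleftrightarrow> is_vertex n u \<and> (\<exists>j\<in>{1..n}. j \<in> s u \<and> w = symdiff u {j})"

definition adjacent :: "nat \<Rightarrow> nat set \<Rightarrow> nat set \<Rightarrow> bool" where
  "adjacent n u w \<longleftrightarrow> is_vertex n u \<and> is_vertex n w \<and> card (symdiff u w) = 1"

definition face :: "nat \<Rightarrow> nat set \<Rightarrow> nat set \<Rightarrow> nat set set" where
  "face n J v = {u. is_vertex n u \<and> symdiff v u \<subseteq> J}"

definition is_sink_of :: "nat \<Rightarrow> (nat set \<Rightarrow> nat set) \<Rightarrow> nat set set \<Rightarrow> nat set \<Rightarrow> bool" where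
  "is_sink_of n s F u \<longleftrightarrow> u \<in> F \<and>
     (\<forall>w\<in>F. adjacent n u w \<longrightarrow> \<not> dedge n s u w)"

definition is_USO :: "nat \<Rightarrow> (nat set \<Rightarrow> nat set) \<Rightarrow> bool" where
  "is_USO n s \<longleftrightarrow> is_orientation n s \<and>
     (\<forall>J v. J \<subseteq> {1..n} \<and> is_vertex n v \<longrightarrow> (\<exists>!u. is_sink_of n s (face n J v) u))"

definition is_AUSO :: "nat \<Rightarrow> (nat set \<Rightarrow> nat set) \<Rightarrow> bool" where
  "is_AUSO n s \<longleftrightarrow> is_USO n s \<and> (\<forall>v. \<not> (dedge n s)\<^sup>+\<^sup>+ v v)"

definition global_sink :: "nat \<Rightarrow> (nat set \<Rightarrow> nat set) \<Rightarrow> nat set \<Rightarrow> bool" where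
  "global_sink n s t \<longleftrightarrow> is_vertex n t \<and> s t = {}"

definition dist_le :: "nat \<Rightarrow> (nat set \<Rightarrow> nat set) \<Rightarrow> nat set \<Rightarrow> nat set \<Rightarrow> nat \<Rightarrow> bool" where
  "dist_le n s v u i \<longleftrightarrow> (\<exists>k\<le>i. (dedge n s ^^ k) v u)"

definition reachmap :: "nat \<Rightarrow> (nat set \<Rightarrow> nat set) \<Rightarrow> nat set \<Rightarrow> nat set" where
  "reachmap n s v = s v \<union> {j. \<exists>u. (dedge n s)\<^sup>*\<^sup>* v u \<and> j \<in> s u}"

definition i_covered_by :: "nat \<Rightarrow> (nat set \<Rightarrow> nat set) \<Rightarrow> nat \<Rightarrow> nat set \<Rightarrow> nat set \<Rightarrow> bool" where
  "i_covered_by n s i v u \<longleftrightarrow> is_vertex n u \<and> dist_le n s v u i \<and> reachmap n s u \<subset> reachmap n s v"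

definition i_nice :: "nat \<Rightarrow> (nat set \<Rightarrow> nat set) \<Rightarrow> nat \<Rightarrow> bool" where
  "i_nice n s i \<longleftrightarrow>
     (\<forall>v. is_vertex n v \<and> \<not> global_sink n s v \<longrightarrow> (\<exists>u. i_covered_by n s i v u))"

end

theory Submission
  imports Defs
begin

lemma symdiff_symdiff: "symdiff v (symdiff v x) = x"
  by (auto simp: symdiff_def)

lemma symdiff_comm: "symdiff u w = symdiff w u"
  by (auto simp: symdiff_def)

lemma uso_from_sw:
  assumes orient: "is_orientation n s"
    and sw: "\<And>u w. is_vertex n u \<Longrightarrow> is_vertex n w \<Longrightarrow> u \<noteq> w \<Longrightarrow>
               \<exists>j\<in>symdiff u w. (j \<in> s u) \<noteq> (j \<in> s w)"
  shows "is_USO n s"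
  unfolding is_USO_def
proof (intro conjI allI impI)
  show "is_orientation n s" by fact
  fix J v assume Jv: "J \<subseteq> {1..n} \<and> is_vertex n v"
  hence J: "J \<subseteq> {1..n}" and v: "is_vertex n v" by auto
  define F where "F = face n J v"
  have sd_sub: "symdiff u w \<subseteq> J" if "u \<in> F" "w \<in> F" for u w
    using that by (auto simp: F_def face_def symdiff_def)
  have sink_iff: "is_sink_of n s F u \<longleftrightarrow> s u \<inter> J = {}" if uF: "u \<in> F" for u
  proof
    assume sk: "is_sink_of n s F u"
    show "s u \<inter> J = {}"
    proof (rule ccontr)
      assume "s u \<inter> J \<noteq> {}"
      then obtain j where j: "j \<in> s u" "j \<in> J" by auto
      define w where "w = symdiff u {j}"
      have uv: "is_vertex n u" using uF by (auto simp: F_def face_def)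
      have jn: "j \<in> {1..n}" using j J by auto
      have wv: "is_vertex n w" using uv jn by (auto simp: w_def is_vertex_def symdiff_def)
      have "symdiff v w \<subseteq> J" using uF j(2) by (auto simp: F_def face_def w_def symdiff_def)
      hence wF: "w \<in> F" using wv by (auto simp: F_def face_def)
      have "symdiff u w = {j}" by (auto simp: w_def symdiff_def)
      hence adj: "adjacent n u w" using uv wv by (simp add: adjacent_def)
      have "dedge n s u w" using uv jn j(1) by (auto simp: dedge_def w_def)
      thus False using sk wF adj by (auto simp: is_sink_of_def)
    qed
  next
    assume e: "s u \<inter> J = {}"
    show "is_sink_of n s F u"
      unfolding is_sink_of_def
    proof (intro conjI ballI impI)
      show "u \<in> F" by fact
      fix w assume wF: "w \<in> F" and adj: "adjacent n u w"
      show "\<not> dedge n s u w"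
      proof
        assume "dedge n s u w"
        then obtain j where j: "j \<in> s u" "w = symdiff u {j}" by (auto simp: dedge_def)
        have "symdiff u w = {j}" using j(2) by (auto simp: symdiff_def)
        hence "j \<in> J" using sd_sub[OF uF wF] by auto
        thus False using e j by auto
      qed
    qed
  qed
  have finJ: "finite J" using J finite_subset by blast
  have imgF: "symdiff v ` Pow J = F"
  proof
    show "symdiff v ` Pow J \<subseteq> F"
      using J v by (auto simp: F_def face_def symdiff_def is_vertex_def)
    show "F \<subseteq> symdiff v ` Pow J"
    proof
      fix u assume "u \<in> F"
      hence "symdiff v u \<in> Pow J" by (auto simp: F_def face_def)
      moreover have "u = symdiff v (symdiff v u)" by (simp add: symdiff_symdiff)
      ultimately show "u \<in> symdiff v ` Pow J" by blast
    qed
  qed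
  have injv: "inj_on (symdiff v) (Pow J)"
    by (rule inj_onI) (metis symdiff_symdiff)
  have cardF: "card F = card (Pow J)"
    using card_image[OF injv] imgF by simp
  have finF: "finite F" using imgF finJ by (metis finite_Pow_iff finite_imageI)
  define f where "f u = s u \<inter> J" for u
  have injf: "inj_on f F"
  proof (rule inj_onI)
    fix u w assume uF: "u \<in> F" and wF: "w \<in> F" and eq: "f u = f w"
    show "u = w"
    proof (rule ccontr)
      assume ne: "u \<noteq> w"
      have "is_vertex n u" "is_vertex n w" using uF wF by (auto simp: F_def face_def)
      then obtain j where j: "j \<in> symdiff u w" "(j \<in> s u) \<noteq> (j \<in> s w)" using sw ne by blast
      have "j \<in> J" using j(1) sd_sub[OF uF wF] by auto
      thus False using eq j(2) by (auto simp: f_def)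
    qed
  qed
  have "f ` F \<subseteq> Pow J" by (auto simp: f_def)
  moreover have "card (f ` F) = card (Pow J)" using card_image[OF injf] cardF by simp
  ultimately have "f ` F = Pow J" using finJ by (simp add: card_subset_eq)
  hence "{} \<in> f ` F" by auto
  then obtain u where uF: "u \<in> F" and "s u \<inter> J = {}" by (auto simp: f_def)
  hence sku: "is_sink_of n s F u" using sink_iff by auto
  have "\<forall>w. is_sink_of n s F w \<longrightarrow> w = u"
  proof (intro allI impI)
    fix w assume skw: "is_sink_of n s F w"
    hence wF: "w \<in> F" by (simp add: is_sink_of_def)
    have "f w = f u" using sink_iff[OF wF] skw sink_iff[OF uF] sku by (simp add: f_def)
    thus "w = u" using injf wF uF by (simp add: inj_on_def)
  qed
  with sku show "\<exists>!u. is_sink_of n s (face n J v) u" unfolding F_def[symmetric] by blast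
qed

definition fl :: "nat set \<Rightarrow> nat \<Rightarrow> bool" where
  "fl u j \<longleftrightarrow> (2 \<le> j \<and> u - {j} = {j - 1}) \<or> (j = 1 \<and> card (u - {j}) = 3)"

lemma fl_sym: "fl (symdiff u {j}) j = fl u j"
proof -
  have "symdiff u {j} - {j} = u - {j}" by (auto simp: symdiff_def)
  thus ?thesis by (simp add: fl_def)
qed

lemma card_two_le: "card {a, b::nat} \<le> 2"
  by (simp add: card_insert_if)

lemma fl_ladder_sub: "u - {j} = {j - 1} \<Longrightarrow> u \<subseteq> {j - 1, j}"
  by blast

lemma fl_match: assumes "fl u j" "fl u k" shows "j = k"
proof (rule ccontr)
  assume ne: "j \<noteq> k"
  show False
  proof (cases "2 \<le> j \<and> u - {j} = {j - 1}")
    case True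
    hence j2: "2 \<le> j" and uj: "u - {j} = {j - 1}" by auto
    have jm1: "j - 1 \<in> u" using uj by blast
    have usub: "u \<subseteq> {j - 1, j}" using uj by blast
    show ?thesis
    proof (cases "2 \<le> k \<and> u - {k} = {k - 1}")
      case True
      hence k2: "2 \<le> k" and uk: "u - {k} = {k - 1}" by auto
      have km1: "k - 1 \<in> u" using uk by blast
      have a: "j - 1 = k"
      proof (rule ccontr)
        assume "j - 1 \<noteq> k"
        hence "j - 1 \<in> u - {k}" using jm1 by blast
        hence "j - 1 = k - 1" using uk by blast
        thus False using ne j2 k2 by arith
      qed
      have b: "k - 1 = j"
      proof (rule ccontr)
        assume "k - 1 \<noteq> j"
        hence "k - 1 \<in> u - {j}" using km1 by blast
        hence "k - 1 = j - 1" using uj by blast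
        thus False using ne j2 k2 by arith
      qed
      show False using a b j2 by arith
    next
      case False
      hence c: "card (u - {k}) = 3" using assms(2) unfolding fl_def by blast
      have "u - {k} \<subseteq> {j - 1, j}" using usub by blast
      hence "card (u - {k}) \<le> card {j - 1, j}" by (intro card_mono) auto
      thus False using c card_two_le[of "j - 1" j] by linarith
    qed
  next
    case False
    hence c: "card (u - {j}) = 3" and j1: "j = 1" using assms(1) unfolding fl_def by blast+
    have "\<not> (k = 1)" using ne j1 by blast
    hence "2 \<le> k \<and> u - {k} = {k - 1}" using assms(2) unfolding fl_def by blast
    hence usub: "u \<subseteq> {k - 1, k}" by blast
    have "u - {j} \<subseteq> {k - 1, k}" using usub by blast
    hence "card (u - {j}) \<le> card {k - 1, k}" by (intro card_mono) auto
    thus False using c card_two_le[of "k - 1" k] by linarith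
  qed
qed

definition sS :: "nat \<Rightarrow> nat set \<Rightarrow> nat set" where
  "sS n u = {j \<in> {1..n}. (j \<in> u) \<noteq> fl u j}"

lemma orient: "is_orientation n (sS n)"
  unfolding is_orientation_def
proof (intro allI impI conjI ballI)
  fix v j assume "is_vertex n v" "j \<in> {1..n}"
  have "j \<in> symdiff v {j} \<longleftrightarrow> j \<notin> v" by (auto simp: symdiff_def)
  thus "(j \<in> sS n v) = (j \<notin> sS n (symdiff v {j}))"
    using fl_sym[of v j] \<open>j \<in> {1..n}\<close> by (auto simp: sS_def)
qed (auto simp: sS_def)

lemma sw_aux:
  assumes H: "\<forall>j\<in>symdiff u w. fl u j \<noteq> fl w j" and j: "j \<in> symdiff u w" and fj: "fl u j"
  shows False
proof (cases "symdiff u w = {j}")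
  case True
  have "w = symdiff u (symdiff u w)" by (simp add: symdiff_symdiff)
  hence "w = symdiff u {j}" using True by simp
  hence "fl w j = fl u j" using fl_sym by simp
  thus False using H j by auto
next
  case False
  then obtain k where k: "k \<in> symdiff u w" "k \<noteq> j" using j by blast
  have nfuk: "\<not> fl u k" using fl_match fj k(2) by blast
  hence fwk: "fl w k" using H k(1) by auto
  have d: "symdiff u w = {j, k}"
  proof (rule ccontr)
    assume "symdiff u w \<noteq> {j, k}"
    then obtain l where l: "l \<in> symdiff u w" "l \<noteq> j" "l \<noteq> k" using j k(1) by blast
    have "\<not> fl u l" using fl_match fj l(2) by blast
    moreover have "\<not> fl w l" using fl_match fwk l(3) by blast
    ultimately show False using H l(1) by auto
  qed
  have "w = symdiff u (symdiff u w)" by (simp add: symdiff_symdiff)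
  hence "symdiff w {k} = symdiff u {j}" using d k(2) by (auto simp: symdiff_def)
  hence "fl (symdiff u {j}) k" using fl_sym[of w k] fwk by simp
  moreover have "fl (symdiff u {j}) j" using fl_sym fj by simp
  ultimately show False using fl_match k(2) by blast
qed

lemma sw: assumes "is_vertex n u" "is_vertex n w" "u \<noteq> w"
  shows "\<exists>j\<in>symdiff u w. (j \<in> sS n u) \<noteq> (j \<in> sS n w)"
proof (rule ccontr)
  assume "\<not> ?thesis"
  hence E: "\<forall>j\<in>symdiff u w. (j \<in> sS n u) = (j \<in> sS n w)" by blast
  have sub: "symdiff u w \<subseteq> {1..n}" using assms by (auto simp: is_vertex_def symdiff_def)
  have H: "\<forall>j\<in>symdiff u w. fl u j \<noteq> fl w j"
  proof
    fix j assume j: "j \<in> symdiff u w"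
    have "(j \<in> u) \<noteq> (j \<in> w)" using j by (auto simp: symdiff_def)
    moreover have "j \<in> {1..n}" using j sub by auto
    ultimately show "fl u j \<noteq> fl w j" using E j by (auto simp: sS_def)
  qed
  have "symdiff u w \<noteq> {}" using assms(3) by (auto simp: symdiff_def)
  then obtain j where j: "j \<in> symdiff u w" by blast
  show False
  proof (cases "fl u j")
    case True thus False using sw_aux H j by blast
  next
    case False
    hence "fl w j" using H j by auto
    moreover have "\<forall>j\<in>symdiff w u. fl w j \<noteq> fl u j" using H symdiff_comm by metis
    moreover have "j \<in> symdiff w u" using j symdiff_comm by metis
    ultimately show False using sw_aux by blast
  qed
qed

lemma uso: "is_USO n (sS n)"
  using uso_from_sw[OF orient sw] by blast

definition P :: "nat \<Rightarrow> nat set \<Rightarrow> nat" where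
  "P n u = (if card u = 0 then 0
     else if card u = 1 then 2 * (n - Min u) + 2
     else if card u = 2 then (if Max u = Suc (Min u) then 2 * (n - Min u) + 1 else 2 * n + 1)
     else if card u = 3 then (if 1 \<in> u then 2 * n + 2 else 2 * n + 4)
     else if card u = 4 then (if 1 \<in> u then 2 * n + 3 else 2 * n + 5)
     else 2 * n + 1 + card u)"

lemma vfin: "is_vertex n u \<Longrightarrow> finite u"
  by (auto simp: is_vertex_def intro: finite_subset)

lemma pot_up:
  assumes v: "is_vertex n u" and jn: "j \<in> {1..n}" and ju: "j \<notin> u" and f: "fl u j"
  shows "P n (insert j u) < P n u"
proof -
  have fin: "finite u" using vfin v by blast
  have uj: "u - {j} = u" using ju by blast
  show ?thesis
  proof (cases "2 \<le> j \<and> u - {j} = {j - 1}")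
    case True
    hence j2: "2 \<le> j" and u1: "u = {j - 1}" using uj by auto
    have ne: "j - 1 \<noteq> j" using j2 by arith
    have "insert j u = {j - 1, j}" using u1 by auto
    moreover have "Min {j - 1, j} = j - 1" "Max {j - 1, j} = Suc (j - 1)" using j2 by auto
    moreover have "card {j - 1, j} = 2" using ne by simp
    ultimately show ?thesis using u1 by (simp add: P_def)
  next
    case False
    hence j1: "j = 1" and c: "card u = 3" using f uj unfolding fl_def by auto
    have "card (insert j u) = 4" using c ju fin by simp
    thus ?thesis using c j1 ju by (simp add: P_def)
  qed
qed

lemma P_card2: "card u = 2 \<Longrightarrow> P n u \<le> 2 * n + 1"
  by (simp add: P_def)

lemma P_card_le4: "card u \<le> 4 \<Longrightarrow> P n u \<le> 2 * n + 5"
  by (auto simp: P_def)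

lemma pot_down:
  assumes v: "is_vertex n u" and ju: "j \<in> u" and f: "\<not> fl u j"
  shows "P n (u - {j}) < P n u"
proof -
  have fin: "finite u" using vfin v by blast
  have sub: "u \<subseteq> {1..n}" using v by (simp add: is_vertex_def)
  define w where "w = u - {j}"
  have "card u > 0" using fin ju card_gt_0_iff by blast
  hence cu: "card u = Suc (card w)" using fin ju by (simp add: w_def)
  have finw: "finite w" using fin by (simp add: w_def)
  have "P n w < P n u"
  proof (cases "card w")
    case 0
    hence "card u = 1" using cu by simp
    thus ?thesis using 0 by (simp add: P_def)
  next
    case (Suc m)
    note cw0 = this
    show ?thesis
    proof (cases m)
      case 0
      hence "card w = 1" using Suc by simp
      then obtain k where wk: "w = {k}" by (auto simp: card_Suc_eq)
      have kj: "k \<noteq> j" using wk by (auto simp: w_def)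
      have uu: "u = {j, k}" using wk ju by (auto simp: w_def)
      have kn: "1 \<le> k" "k \<le> n" "1 \<le> j" "j \<le> n" using sub uu by auto
      have c2: "card u = 2" using uu kj by simp
      have nf: "\<not> (2 \<le> j \<and> k = j - 1)"
      proof
        assume a: "2 \<le> j \<and> k = j - 1"
        hence "u - {j} = {j - 1}" using wk by (simp add: w_def)
        thus False using f a by (simp add: fl_def)
      qed
      have Pw: "P n w = 2 * (n - k) + 2" using wk by (simp add: P_def)
      show ?thesis
      proof (cases "Max u = Suc (Min u)")
        case True
        have "k = Suc j"
        proof (cases "j \<le> k")
          case True
          hence "Min u = j" "Max u = k" using uu by (auto simp: min_def max_def)
          thus ?thesis using \<open>Max u = Suc (Min u)\<close> by simp
        next
          case False
          hence "Min u = k" "Max u = j" using uu by (auto simp: min_def max_def)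
          hence "j = Suc k" using \<open>Max u = Suc (Min u)\<close> by simp
          thus ?thesis using nf kn by auto
        qed
        hence "Min u = j" using uu by (auto simp: min_def)
        hence "P n u = 2 * (n - j) + 1" using c2 True by (simp add: P_def)
        thus ?thesis using Pw \<open>k = Suc j\<close> kn by simp
      next
        case False
        hence "P n u = 2 * n + 1" using c2 by (simp add: P_def)
        thus ?thesis using Pw kn by simp
      qed
    next
      case (Suc m')
      note m = this
      show ?thesis
      proof (cases m')
        case 0
        hence "card w = 2" "card u = 3" using cw0 m 0 cu by auto
        thus ?thesis using P_card2[of w n] by (simp add: P_def)
      next
        case (Suc m'')
        note m2 = this
        show ?thesis
        proof (cases m'')
          case 0
          hence cw: "card w = 3" and cuu: "card u = 4" using cw0 m m2 0 cu by auto
          show ?thesis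
          proof (cases "1 \<in> u")
            case True
            have "j \<noteq> 1"
            proof
              assume "j = 1"
              hence "fl u j" using cw by (simp add: fl_def w_def)
              thus False using f by simp
            qed
            hence "1 \<in> w" using True by (simp add: w_def)
            thus ?thesis using cw cuu True by (simp add: P_def)
          next
            case False
            hence "1 \<notin> w" by (simp add: w_def)
            thus ?thesis using cw cuu False by (simp add: P_def)
          qed
        next
          case (Suc m3)
          hence "card w \<ge> 4" "card u \<ge> 5" using cw0 m m2 Suc cu by auto
          thus ?thesis using cu by (cases "card w = 4") (auto simp: P_def)
        qed
      qed
    qed
  qed
  thus ?thesis by (simp add: w_def)
qed

lemma pot_edge: assumes "dedge n (sS n) u w" shows "P n w < P n u"
proof -
  from assms obtain j where v: "is_vertex n u" and j: "j \<in> {1..n}" "j \<in> sS n u"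
    and w: "w = symdiff u {j}" by (auto simp: dedge_def)
  show ?thesis
  proof (cases "j \<in> u")
    case True
    hence "\<not> fl u j" using j by (simp add: sS_def)
    moreover have "w = u - {j}" using w True by (auto simp: symdiff_def)
    ultimately show ?thesis using pot_down v True by simp
  next
    case False
    hence "fl u j" using j by (simp add: sS_def)
    moreover have "w = insert j u" using w False by (auto simp: symdiff_def)
    ultimately show ?thesis using pot_up v j(1) False by simp
  qed
qed

lemma pot_trancl: "(dedge n (sS n))\<^sup>+\<^sup>+ u w \<Longrightarrow> P n w < P n u"
proof (induction rule: tranclp_induct)
  case (base y) thus ?case using pot_edge by blast
next
  case (step y z) thus ?case using pot_edge[of n y z] by linarith
qed

lemma auso: "is_AUSO n (sS n)"
  unfolding is_AUSO_def using uso pot_trancl by blast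

abbreviation E where "E n \<equiv> dedge n (sS n)"

lemma down_edge:
  assumes v: "is_vertex n u" and ju: "j \<in> u" and f: "\<not> fl u j"
  shows "E n u (u - {j})"
proof -
  have jn: "j \<in> {1..n}" using v ju by (auto simp: is_vertex_def)
  have "j \<in> sS n u" using jn ju f by (simp add: sS_def)
  moreover have "u - {j} = symdiff u {j}" using ju by (auto simp: symdiff_def)
  ultimately show ?thesis using v jn by (auto simp: dedge_def)
qed

lemma up_edge:
  assumes v: "is_vertex n u" and jn: "j \<in> {1..n}" and ju: "j \<notin> u" and f: "fl u j"
  shows "E n u (insert j u)"
proof -
  have "j \<in> sS n u" using jn ju f by (simp add: sS_def)
  moreover have "insert j u = symdiff u {j}" using ju by (auto simp: symdiff_def)
  ultimately show ?thesis using v jn by (auto simp: dedge_def)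
qed

lemma down_path:
  assumes "is_vertex n u" "w \<subseteq> u" "2 \<le> card w" "1 \<in> w \<or> 1 \<notin> u"
  shows "(E n)\<^sup>*\<^sup>* u w"
  using assms
proof (induction "card (u - w)" arbitrary: u rule: less_induct)
  case less
  have finu: "finite u" using vfin less.prems(1) by blast
  show ?case
  proof (cases "u = w")
    case True thus ?thesis by simp
  next
    case False
    then obtain j where j: "j \<in> u" "j \<notin> w" using less.prems(2) by blast
    have j1: "j \<noteq> 1" using j less.prems(4) by blast
    have nf: "\<not> fl u j"
    proof
      assume "fl u j"
      hence "u - {j} = {j - 1}" using j1 by (auto simp: fl_def)
      hence "w \<subseteq> {j - 1}" using less.prems(2) j(2) by blast
      hence "card w \<le> card {j - 1}" by (intro card_mono) auto
      thus False using less.prems(3) by simp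
    qed
    have e: "E n u (u - {j})" using down_edge[OF less.prems(1) j(1) nf] .
    have v': "is_vertex n (u - {j})" using less.prems(1) by (auto simp: is_vertex_def)
    have "card ((u - {j}) - w) < card (u - w)"
    proof -
      have "(u - {j}) - w = (u - w) - {j}" by blast
      moreover have "j \<in> u - w" using j by blast
      moreover have "finite (u - w)" using finu by blast
      ultimately show ?thesis by (metis card_Diff1_less)
    qed
    moreover have "w \<subseteq> u - {j}" using less.prems(2) j(2) by blast
    moreover have "1 \<in> w \<or> 1 \<notin> u - {j}" using less.prems(4) by blast
    ultimately have "(E n)\<^sup>*\<^sup>* (u - {j}) w" using less.hyps v' less.prems(3) by blast
    thus ?thesis using e by (meson converse_rtranclp_into_rtranclp)
  qed
qed

lemma ladder:
  assumes "1 \<le> i" "i < n"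
  shows "(E n)\<^sup>*\<^sup>* {i} {Suc i}"
proof -
  have v1: "is_vertex n {i}" using assms by (simp add: is_vertex_def)
  have d1: "{i} - {Suc i} = {Suc i - 1}" by simp
  have f1: "fl {i} (Suc i)" using assms unfolding fl_def d1 by simp
  have e1: "E n {i} {Suc i, i}"
    using up_edge[OF v1 _ _ f1] assms by simp
  have v2: "is_vertex n {Suc i, i}" using assms by (simp add: is_vertex_def)
  have d: "{Suc i, i} - {i} = {Suc i}" by auto
  have ne: "{Suc i} \<noteq> {i - 1}" by simp
  have f2: "\<not> fl {Suc i, i} i" unfolding fl_def d using ne by simp
  have e2: "E n {Suc i, i} ({Suc i, i} - {i})"
    using down_edge[OF v2 _ f2] by simp
  have "{Suc i, i} - {i} = {Suc i}" by auto
  hence e2': "E n {Suc i, i} {Suc i}" using e2 by simp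
  show ?thesis by (rule converse_rtranclp_into_rtranclp[OF e1 r_into_rtranclp[of "E n", OF e2']])
qed

lemma ladder_path:
  assumes "1 \<le> k" "k \<le> n"
  shows "(E n)\<^sup>*\<^sup>* {1} {k}"
  using assms
proof (induction k)
  case 0 thus ?case by simp
next
  case (Suc k)
  show ?case
  proof (cases "k = 0")
    case True thus ?thesis by simp
  next
    case False
    hence "1 \<le> k" "k \<le> n" using Suc.prems by auto
    hence "(E n)\<^sup>*\<^sup>* {1} {k}" by (rule Suc.IH)
    moreover have "(E n)\<^sup>*\<^sup>* {k} {Suc k}" using ladder False Suc.prems by simp
    ultimately show ?thesis by (rule rtranclp_trans)
  qed
qed

lemma reach1_with1:
  assumes v: "is_vertex n u" and c: "3 \<le> card u" and one: "1 \<in> u"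
  shows "(E n)\<^sup>*\<^sup>* u {1}"
proof -
  have finu: "finite u" using vfin v by blast
  have "\<not> u \<subseteq> {1, 2}"
  proof
    assume "u \<subseteq> {1, 2}"
    hence "card u \<le> card {1, 2::nat}" by (intro card_mono) auto
    thus False using c by simp
  qed
  then obtain k where k: "k \<in> u" "k \<noteq> 1" "k \<noteq> 2" by blast
  have s1: "{1, k} \<subseteq> u" using k one by blast
  have c2: "2 \<le> card {1, k}" using k by simp
  have p1: "(E n)\<^sup>*\<^sup>* u {1, k}"
    using down_path[OF v s1 c2] by simp
  have vk: "is_vertex n {1, k}" using v k one by (auto simp: is_vertex_def)
  have d: "{1, k} - {k} = {1::nat}" using k by auto
  have ne: "{1::nat} \<noteq> {k - 1}" using k by auto
  have nf: "\<not> fl {1, k} k" unfolding fl_def d using ne k by simp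
  have e0: "E n {1, k} ({1, k} - {k})" using down_edge[OF vk _ nf] by simp
  hence e: "E n {1, k} {1}" unfolding d .
  show ?thesis by (rule rtranclp.rtrancl_into_rtrancl[of "E n", OF p1 e])
qed

lemma reach1:
  assumes v: "is_vertex n u" and c: "3 \<le> card u"
  shows "(E n)\<^sup>*\<^sup>* u {1}"
proof (cases "1 \<in> u")
  case True thus ?thesis using reach1_with1 assms by blast
next
  case False
  have finu: "finite u" using vfin v by blast
  obtain T where T: "T \<subseteq> u" "card T = 3" using obtain_subset_with_card_n[OF c] by blast
  have p1: "(E n)\<^sup>*\<^sup>* u T" using down_path[OF v T(1)] T False by simp
  have vT: "is_vertex n T" using v T by (auto simp: is_vertex_def)
  have "u \<noteq> {}" using c by auto
  hence n1: "1 \<le> n" using v by (auto simp: is_vertex_def)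
  have T1: "1 \<notin> T" using T False by blast
  have dT: "T - {1} = T" using T1 by simp
  have fT: "fl T 1" unfolding fl_def dT using T by simp
  have e: "E n T (insert 1 T)" using up_edge[OF vT _ T1 fT] n1 by simp
  have vT1: "is_vertex n (insert 1 T)" using vT n1 by (auto simp: is_vertex_def)
  have finT: "finite T" using T finu finite_subset by blast
  have "card (insert 1 T) = 4" using T T1 finT by simp
  hence "(E n)\<^sup>*\<^sup>* (insert 1 T) {1}" using reach1_with1[OF vT1] by simp
  thus ?thesis by (rule rtranclp_trans[OF p1 converse_rtranclp_into_rtranclp[of "E n", OF e]])
qed

lemma reach_all:
  assumes v: "is_vertex n u" and c: "3 \<le> card u"
  shows "{1..n} \<subseteq> reachmap n (sS n) u"
proof
  fix j assume j: "j \<in> {1..n}"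
  have r1: "(E n)\<^sup>*\<^sup>* u {1}" using reach1[OF v c] .
  show "j \<in> reachmap n (sS n) u"
  proof (cases "j = 1")
    case True
    have "1 \<in> sS n {1}" using j True by (simp add: sS_def fl_def)
    thus ?thesis using r1 True by (auto simp: reachmap_def)
  next
    case False
    hence j2: "2 \<le> j" using j by auto
    have "(E n)\<^sup>*\<^sup>* {1} {j - 1}" using ladder_path[of "j - 1" n] j j2 by simp
    hence r2: "(E n)\<^sup>*\<^sup>* u {j - 1}" using r1 by (rule rtranclp_trans[rotated])
    have dd: "{j - 1} - {j} = {j - 1}" using j2 by auto
    have "fl {j - 1} j" using j2 unfolding fl_def dd by simp
    moreover have "j \<notin> {j - 1}" using j2 by auto
    ultimately have "j \<in> sS n {j - 1}" using j by (simp add: sS_def)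
    thus ?thesis using r2 by (auto simp: reachmap_def)
  qed
qed

lemma pow_card:
  "(E n ^^ k) v u \<Longrightarrow> is_vertex n v \<Longrightarrow> is_vertex n u \<and> card v \<le> card u + k"
proof (induction k arbitrary: u)
  case 0 thus ?case by simp
next
  case (Suc k)
  from Suc.prems(1) obtain y where y1: "(E n ^^ k) v y" and y2: "E n y u" by auto
  have ih: "is_vertex n y \<and> card v \<le> card y + k" using Suc.IH[OF y1 Suc.prems(2)] .
  from y2 obtain j where j: "j \<in> {1..n}" and u: "u = symdiff y {j}" by (auto simp: dedge_def)
  have yv: "is_vertex n y" using ih by simp
  have uv: "is_vertex n u" using yv j u by (auto simp: is_vertex_def symdiff_def)
  have finu: "finite u" using vfin uv by blast
  have "y \<subseteq> insert j u" using u by (auto simp: symdiff_def)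
  hence "card y \<le> card (insert j u)" using finu by (intro card_mono) auto
  also have "\<dots> \<le> Suc (card u)" by (simp add: card_insert_if finu)
  finally show ?case using ih uv by simp
qed

lemma reachmap_sub: "reachmap n (sS n) u \<subseteq> {1..n}"
  by (auto simp: reachmap_def sS_def)

theorem theorem16:
  fixes n :: nat
  assumes "n \<ge> 1"
  shows "\<exists>s. is_AUSO n s \<and> (\<forall>i::nat. int i < int n - 2 \<longrightarrow> \<not> i_nice n s i)"
proof (intro exI conjI allI impI)
  show "is_AUSO n (sS n)" by (rule auso)
  fix i :: nat assume i: "int i < int n - 2"
  hence n3: "3 \<le> n" "i + 3 \<le> n" by auto
  show "\<not> i_nice n (sS n) i"
  proof
    assume nice: "i_nice n (sS n) i"
    define v where "v = {1..n}"
    have vv: "is_vertex n v" by (simp add: v_def is_vertex_def)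
    have nv: "n \<in> v" using n3 by (simp add: v_def)
    have "1 \<in> v - {n}" "1 \<noteq> n - 1" using n3 by (auto simp: v_def)
    hence "v - {n} \<noteq> {n - 1}" by auto
    hence "\<not> fl v n" using n3 by (simp add: fl_def)
    hence "n \<in> sS n v" using nv n3 by (simp add: sS_def)
    hence ns: "\<not> global_sink n (sS n) v" by (auto simp: global_sink_def)
    obtain u where cov: "i_covered_by n (sS n) i v u"
      using nice vv ns unfolding i_nice_def by blast
    hence uv: "is_vertex n u" and d: "dist_le n (sS n) v u i"
      and lt: "reachmap n (sS n) u \<subset> reachmap n (sS n) v"
      by (auto simp: i_covered_by_def)
    obtain k where k: "k \<le> i" "(E n ^^ k) v u" using d by (auto simp: dist_le_def)
    have "card v \<le> card u + k" using pow_card[OF k(2) vv] by simp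
    moreover have "card v = n" by (simp add: v_def)
    ultimately have "3 \<le> card u" using k(1) n3 by linarith
    hence "{1..n} \<subseteq> reachmap n (sS n) u" using reach_all[OF uv] by blast
    moreover have "reachmap n (sS n) v \<subseteq> {1..n}" by (rule reachmap_sub)
    ultimately show False using lt by blast
  qed
qed

end
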